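(* Let $J$ and $K$ be subcontinua of the Cantor fan $C=F/{\sim}$ with $v\in K\subseteq J$, and let $r:J\to K$ be a retraction. Suppose there is a retraction $R:H_J\to H_K$ such that $q(R(x))=r(q(x))$ for every $x\in H_J$. Then $r$ is semi-simple, i.e. for every leg $A\in\mathcal L(J)$ there is a leg $B\in\mathcal L(J)$ with $r(A)\subseteq B$.
   Context: Let $Y$ be a Cantor set, $F=Y\times[0,1]$, and let $\sim$ be the equivalence relation on $F$ given by $(x,t)\sim(y,s)$ iff $(x,t)=(y,s)$ or $s=t=0$. Let $C=F/{\sim}$ (a Cantor fan), $q:F\to C$ the quotient map, and $v=q(Y\times\{0\})$ the top of $C$. For a subcontinuum $K$ of $C$ put $H_K=\mathrm{Cl}_F(q^{-1}(K\setminus\{v\}))$ (a fence of $K$); note $H_K\subseteq H_J$ when $K\subseteq J$. For a subcontinuum $J$ of $C$ containing $v$ (which is a fan), an end point of $J$ is a point that is an end point of every arc in $J$ containing it; a leg of $J$ is an arc from $v$ to an end point $e\neq v$ of $J$; $\mathcal L(J)$ denotes the set of legs. A retraction from $X$ onto a subspace $Z$ is a continuous map $r:X\to Z$ with $r(z)=z$ for all $z\in Z$. *)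

theory Defs
  imports "HOL-Analysis.Analysis"
begin

definition cantor_ternary :: "real set" where
  "cantor_ternary = {x. \<exists>d::nat \<Rightarrow> nat. (\<forall>n. d n \<in> {0,2}) \<and>
       (\<lambda>n. real (d n) / 3 ^ (Suc n)) sums x}"

definition arc_in :: "'c topology \<Rightarrow> 'c set \<Rightarrow> 'c \<Rightarrow> 'c \<Rightarrow> bool" where
  "arc_in X A a b \<longleftrightarrow> A \<subseteq> topspace X \<and>
     (\<exists>g. homeomorphic_map (top_of_set {0..1::real}) (subtopology X A) g \<and> g 0 = a \<and> g 1 = b)"

definition end_point_of :: "'c topology \<Rightarrow> 'c set \<Rightarrow> 'c \<Rightarrow> bool" where
  "end_point_of X J e \<longleftrightarrow> e \<in> J \<and>
     (\<forall>A a b. A \<subseteq> J \<and> arc_in X A a b \<and> e \<in> A \<longrightarrow> e = a \<or> e = b)"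

definition legs :: "'c topology \<Rightarrow> 'c \<Rightarrow> 'c set \<Rightarrow> 'c set set" where
  "legs X v J = {A. A \<subseteq> J \<and> (\<exists>e. e \<noteq> v \<and> end_point_of X J e \<and> arc_in X A v e)}"

definition subcontinuum :: "'c topology \<Rightarrow> 'c set \<Rightarrow> bool" where
  "subcontinuum X K \<longleftrightarrow> K \<noteq> {} \<and> compactin X K \<and> connectedin X K"

definition retraction_onto :: "'c topology \<Rightarrow> 'c set \<Rightarrow> 'c set \<Rightarrow> ('c \<Rightarrow> 'c) \<Rightarrow> bool" where
  "retraction_onto X J K r \<longleftrightarrow> K \<subseteq> J \<and>
     continuous_map (subtopology X J) (subtopology X K) r \<and> (\<forall>z\<in>topspace X \<inter> K. r z = z)"

definition fence :: "'f topology \<Rightarrow> ('f \<Rightarrow> 'c) \<Rightarrow> 'c \<Rightarrow> 'c set \<Rightarrow> 'f set" where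
  "fence F q v K = F closure_of {x \<in> topspace F. q x \<in> K - {v}}"

definition semi_simple :: "'c topology \<Rightarrow> 'c \<Rightarrow> 'c set \<Rightarrow> ('c \<Rightarrow> 'c) \<Rightarrow> bool" where
  "semi_simple X v J r \<longleftrightarrow> (\<forall>A\<in>legs X v J. \<exists>B\<in>legs X v J. r ` A \<subseteq> B)"

end

theory Submission
  imports Defs
begin


lemma cantor_bounds:
  assumes "x \<in> cantor_ternary" shows "0 \<le> x \<and> x \<le> 1"
proof -
  obtain d where d: "\<forall>n. d n \<in> {0,2}" "(\<lambda>n. real (d n) / 3 ^ (Suc n)) sums x"
    using assms unfolding cantor_ternary_def by blast
  have g: "(\<lambda>n. 2 / 3 ^ (Suc n) :: real) sums 1"
  proof -
    have "(\<lambda>n. (2/3) * (1/3) ^ n :: real) sums ((2/3) * (1 / (1 - 1/3)))"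
      by (intro sums_mult geometric_sums) auto
    thus ?thesis by (simp add: power_divide field_simps)
  qed
  have "x \<le> 1"
  proof (rule sums_le[OF _ d(2) g])
    fix n
    have "real (d n) \<le> 2" using d(1)[rule_format, of n] by auto
    thus "real (d n) / 3 ^ (Suc n) \<le> 2 / 3 ^ (Suc n)" by (simp add: divide_right_mono)
  qed
  moreover have "0 \<le> x"
    by (rule sums_le[OF _ sums_zero d(2)]) auto
  ultimately show ?thesis by auto
qed

lemma cantor_step:
  assumes "x \<in> cantor_ternary"
  shows "3*x \<in> cantor_ternary \<or> 3*x - 2 \<in> cantor_ternary"
proof -
  obtain d where d: "\<forall>n. d n \<in> {0,2}" "(\<lambda>n. real (d n) / 3 ^ (Suc n)) sums x"
    using assms unfolding cantor_ternary_def by blast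
  have "(\<lambda>n. real (d (Suc n)) / 3 ^ (Suc (Suc n))) sums (x - real (d 0) / 3)"
    using d(2) sums_Suc_iff[of "\<lambda>n. real (d n) / 3 ^ (Suc n)" "x - real (d 0) / 3"] by simp
  have "(\<lambda>n. real (d (Suc n)) / 3 ^ (Suc n)) sums (3*x - real (d 0))"
  proof -
    have "3 * (x - real (d 0) / 3) = 3*x - real (d 0)" by simp
    moreover have "(\<lambda>n. real (d (Suc n)) / 3 ^ (Suc (Suc n)) * 3) = (\<lambda>n. real (d (Suc n)) / 3 ^ (Suc n))"
      by (auto simp: field_simps)
    ultimately show ?thesis using sums_mult2[OF \<open>(\<lambda>n. real (d (Suc n)) / 3 ^ (Suc (Suc n))) sums (x - real (d 0) / 3)\<close>, of 3]
      by (simp add: mult.commute)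
  qed
  hence "3*x - real (d 0) \<in> cantor_ternary"
    unfolding cantor_ternary_def using d(1) by (intro CollectI exI[of _ "\<lambda>n. d (Suc n)"]) auto
  moreover have "d 0 = 0 \<or> d 0 = 2" using d(1) by blast
  ultimately show ?thesis by auto
qed

lemma cantor_gap:
  assumes "x \<in> cantor_ternary" shows "x \<le> 1/3 \<or> 2/3 \<le> x"
  using cantor_step[OF assms] cantor_bounds[of "3*x"] cantor_bounds[of "3*x-2"] by auto

lemma cantor_interval_step:
  assumes "a < b" "{a..b} \<subseteq> cantor_ternary"
  shows "\<exists>a' b'. b' - a' = 3*(b-a) \<and> {a'..b'} \<subseteq> cantor_ternary"
proof -
  consider "b \<le> 1/3" | "2/3 \<le> a" | "a < 2/3" "1/3 < b" by linarith
  then show ?thesis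
  proof cases
    case 1
    show ?thesis
    proof (intro exI conjI)
      show "{3*a..3*b} \<subseteq> cantor_ternary"
      proof
        fix y assume y: "y \<in> {3*a..3*b}"
        hence "y/3 \<in> cantor_ternary" using assms by auto
        from cantor_step[OF this] have "y \<in> cantor_ternary \<or> y - 2 \<in> cantor_ternary" by simp
        moreover have "y - 2 < 0" using y 1 by auto
        ultimately show "y \<in> cantor_ternary" using cantor_bounds[of "y - 2"] by auto
      qed
    qed auto
  next
    case 2
    show ?thesis
    proof (intro exI conjI)
      show "{3*a-2..3*b-2} \<subseteq> cantor_ternary"
      proof
        fix y assume y: "y \<in> {3*a-2..3*b-2}"
        hence "(y+2)/3 \<in> cantor_ternary" using assms by auto
        from cantor_step[OF this] have "y+2 \<in> cantor_ternary \<or> y \<in> cantor_ternary" by (simp add: add_divide_distrib)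
        moreover have "y + 2 > 1" using y 2 by auto
        ultimately show "y \<in> cantor_ternary" using cantor_bounds[of "y + 2"] by auto
      qed
    qed auto
  next
    case 3
    define z where "z = (if 1/2 \<le> a then a else min b (1/2))"
    have "z \<in> {a..b}" "1/3 < z" "z < 2/3" using 3 assms(1) by (auto simp: z_def)
    hence "z \<in> cantor_ternary" using assms(2) by blast
    thus ?thesis using cantor_gap[of z] \<open>1/3 < z\<close> \<open>z < 2/3\<close> by auto
  qed
qed

lemma cantor_no_interval:
  assumes "a < b" shows "\<not> {a..b} \<subseteq> cantor_ternary"
proof
  assume H: "{a..b} \<subseteq> cantor_ternary"
  have "\<exists>a' b'. b' - a' = 3^n*(b-a) \<and> {a'..b'} \<subseteq> cantor_ternary" for n
  proof (induction n)
    case 0 then show ?case using H by auto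
  next
    case (Suc n)
    then obtain a' b' where ab: "b' - a' = 3^n*(b-a)" "{a'..b'} \<subseteq> cantor_ternary" by blast
    have "0 < 3^n*(b-a)" using assms by simp
    hence "a' < b'" using ab(1) by linarith
    from cantor_interval_step[OF this ab(2)] show ?case using ab(1) by (auto simp: mult.assoc)
  qed
  moreover obtain n where n: "1 / (b-a) < 3^n" using real_arch_pow[of 3 "1/(b-a)"] by auto
  ultimately obtain a' b' where ab: "b' - a' = 3^n*(b-a)" "{a'..b'} \<subseteq> cantor_ternary" by blast
  have "1 < 3^n*(b-a)" using n assms by (simp add: field_simps)
  hence "a' < b'" using ab by simp
  hence "a' \<in> cantor_ternary" "b' \<in> cantor_ternary" using ab by auto
  hence "b' - a' \<le> 1" using cantor_bounds[of a'] cantor_bounds[of b'] by linarith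
  thus False using ab \<open>1 < 3^n*(b-a)\<close> by simp
qed

lemma cantor_connected:
  assumes "connected S" "S \<subseteq> cantor_ternary" "x \<in> S" "y \<in> S" shows "x = y"
proof (rule ccontr)
  assume "x \<noteq> y"
  then obtain a b where ab: "a < b" "a \<in> S" "b \<in> S" using assms
    by (metis linorder_neqE_linordered_idom)
  have "{a..b} \<subseteq> S" using assms(1) ab
    by (meson atLeastAtMost_iff connected_contains_Icc subsetI)
  thus False using cantor_no_interval[OF ab(1)] assms(2) by auto
qed

lemma cantor_not_left:
  assumes "\<delta> > 0" shows "\<exists>a. c - \<delta> < a \<and> a < c \<and> a \<notin> cantor_ternary"
proof (rule ccontr)
  assume "\<not> ?thesis"
  hence *: "\<forall>a. c - \<delta> < a \<and> a < c \<longrightarrow> a \<in> cantor_ternary" by blast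
  have "{c-\<delta>/2..c-\<delta>/4} \<subseteq> cantor_ternary"
  proof
    fix x assume "x \<in> {c-\<delta>/2..c-\<delta>/4}" thus "x \<in> cantor_ternary" using *[rule_format, of x] assms by auto
  qed
  thus False using cantor_no_interval[of "c-\<delta>/2" "c-\<delta>/4"] assms by auto
qed

lemma cantor_not_right:
  assumes "\<delta> > 0" shows "\<exists>a. c < a \<and> a < c + \<delta> \<and> a \<notin> cantor_ternary"
proof (rule ccontr)
  assume "\<not> ?thesis"
  hence *: "\<forall>a. c < a \<and> a < c + \<delta> \<longrightarrow> a \<in> cantor_ternary" by blast
  have "{c+\<delta>/4..c+\<delta>/2} \<subseteq> cantor_ternary"
  proof
    fix x assume "x \<in> {c+\<delta>/4..c+\<delta>/2}" thus "x \<in> cantor_ternary" using *[rule_format, of x] assms by auto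
  qed
  thus False using cantor_no_interval[of "c+\<delta>/4" "c+\<delta>/2"] assms by auto
qed

lemma cantor_zero: "0 \<in> cantor_ternary"
  unfolding cantor_ternary_def by (intro CollectI exI[of _ "\<lambda>_. 0"]) auto




lemma Y_facts:
  assumes "Y homeomorphic_space top_of_set cantor_ternary"
  shows "\<exists>\<phi>. continuous_map Y euclideanreal \<phi> \<and> \<phi> ` topspace Y = cantor_ternary \<and>
    inj_on \<phi> (topspace Y) \<and> (\<forall>W. openin Y W \<longrightarrow> openin (top_of_set cantor_ternary) (\<phi> ` W))"
proof -
  obtain \<phi> where h: "homeomorphic_map Y (top_of_set cantor_ternary) \<phi>"
    using assms homeomorphic_space by blast
  have h1: "continuous_map Y (top_of_set cantor_ternary) \<phi>" "open_map Y (top_of_set cantor_ternary) \<phi>"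
     "\<phi> ` topspace Y = cantor_ternary" "inj_on \<phi> (topspace Y)"
    using h unfolding homeomorphic_eq_everything_map by simp_all
  moreover have "continuous_map Y euclideanreal \<phi>"
    by (rule continuous_map_into_fulltopology[OF \<open>continuous_map Y (top_of_set cantor_ternary) \<phi>\<close>])
  moreover have "\<And>W. openin Y W \<Longrightarrow> openin (top_of_set cantor_ternary) (\<phi> ` W)"
    using \<open>open_map Y (top_of_set cantor_ternary) \<phi>\<close> unfolding open_map_def by blast
  ultimately show ?thesis using h1 by blast
qed

lemma Y_conn:
  assumes "Y homeomorphic_space top_of_set cantor_ternary" "connectedin Y S" "x \<in> S" "y \<in> S"
  shows "x = y"
proof -
  obtain \<phi> where p: "continuous_map Y euclideanreal \<phi>" "\<phi> ` topspace Y = cantor_ternary"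
    "inj_on \<phi> (topspace Y)" and p4: "\<forall>W. openin Y W \<longrightarrow> openin (top_of_set cantor_ternary) (\<phi> ` W)"
    using Y_facts[OF assms(1)] by auto
  have "connected (\<phi> ` S)" using connectedin_continuous_map_image[OF p(1) assms(2)] by simp
  moreover have S: "S \<subseteq> topspace Y" using assms(2) connectedin_subset_topspace by blast
  hence "\<phi> ` S \<subseteq> cantor_ternary" using p(2) by blast
  ultimately have "\<phi> x = \<phi> y" using cantor_connected assms(3,4) by blast
  show ?thesis by (rule inj_onD[OF p(3) \<open>\<phi> x = \<phi> y\<close>]) (use S assms(3,4) in auto)
qed

lemma Y_Hausdorff:
  assumes "Y homeomorphic_space top_of_set cantor_ternary" shows "Hausdorff_space Y"
proof -
  have "Hausdorff_space (top_of_set cantor_ternary)" by (rule Hausdorff_space_subtopology) simp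
  thus ?thesis using homeomorphic_Hausdorff_space[OF assms] by simp
qed

lemma Y_nonempty:
  assumes "Y homeomorphic_space top_of_set cantor_ternary" shows "topspace Y \<noteq> {}"
proof -
  obtain \<phi> where p: "continuous_map Y euclideanreal \<phi>" "\<phi> ` topspace Y = cantor_ternary"
    "inj_on \<phi> (topspace Y)" and p4: "\<forall>W. openin Y W \<longrightarrow> openin (top_of_set cantor_ternary) (\<phi> ` W)"
    using Y_facts[OF assms] by auto
  from p(2) show ?thesis using cantor_zero by auto
qed



lemma Y_clopen:
  assumes "Y homeomorphic_space top_of_set cantor_ternary" "openin Y W0" "y \<in> W0"
  shows "\<exists>W. y \<in> W \<and> W \<subseteq> W0 \<and> openin Y W \<and> closedin Y W"
proof -
  obtain \<phi> where p: "continuous_map Y euclideanreal \<phi>" "\<phi> ` topspace Y = cantor_ternary"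
    "inj_on \<phi> (topspace Y)" and p4: "\<forall>W. openin Y W \<longrightarrow> openin (top_of_set cantor_ternary) (\<phi> ` W)"
    using Y_facts[OF assms(1)] by auto
  have W0: "W0 \<subseteq> topspace Y" using assms(2) openin_subset by blast
  obtain T where T: "open T" "\<phi> ` W0 = cantor_ternary \<inter> T"
    using p4[rule_format, OF assms(2)] by (auto simp: openin_open)
  have "\<phi> y \<in> T" using T assms(3) by auto
  then obtain \<delta> where d: "\<delta> > 0" "ball (\<phi> y) \<delta> \<subseteq> T" using T(1) open_contains_ball by blast
  obtain a where a: "\<phi> y - \<delta> < a" "a < \<phi> y" "a \<notin> cantor_ternary" using cantor_not_left[OF d(1)] by blast
  obtain b where b: "\<phi> y < b" "b < \<phi> y + \<delta>" "b \<notin> cantor_ternary" using cantor_not_right[OF d(1)] by blast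
  define W where "W = {x \<in> topspace Y. \<phi> x \<in> {a<..<b}}"
  have "openin Y W" unfolding W_def by (rule openin_continuous_map_preimage[OF p(1)]) auto
  moreover have "W = {x \<in> topspace Y. \<phi> x \<in> {a..b}}"
    using p(2) a(3) b(3) unfolding W_def by force
  hence "closedin Y W" by (metis closedin_continuous_map_preimage[OF p(1)] closed_atLeastAtMost closed_closedin)
  moreover have "y \<in> W" using a b assms(3) W0 unfolding W_def by auto
  moreover have "W \<subseteq> W0"
  proof
    fix x assume x: "x \<in> W"
    hence "\<phi> x \<in> ball (\<phi> y) \<delta>" using a b unfolding W_def by (auto simp: dist_real_def)
    hence "\<phi> x \<in> \<phi> ` W0" using T d x p(2) unfolding W_def by blast
    then obtain x' where "x' \<in> W0" "\<phi> x = \<phi> x'" by blast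
    thus "x \<in> W0" using p(3) W0 x unfolding W_def by (metis (no_types, lifting) inj_onD mem_Collect_eq subsetD)
  qed
  ultimately show ?thesis by blast
qed




locale cfan =
  fixes Y :: "'a topology" and Ctop :: "'c topology" and q :: "'a \<times> real \<Rightarrow> 'c" and v :: 'c
  assumes Y_cantor: "Y homeomorphic_space top_of_set cantor_ternary"
    and q_quot: "quotient_map (prod_topology Y (top_of_set {0..1::real})) Ctop q"
    and q_ident: "\<forall>x\<in>topspace (prod_topology Y (top_of_set {0..1::real})).
                  \<forall>y\<in>topspace (prod_topology Y (top_of_set {0..1::real})).
                    q x = q y \<longleftrightarrow> (x = y \<or> (snd x = 0 \<and> snd y = 0))"
    and v_top: "\<forall>y\<in>topspace Y. v = q (y, 0)"
begin

abbreviation "FF \<equiv> prod_topology Y (top_of_set {0..1::real})"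

lemma topF: "topspace FF = topspace Y \<times> {0..1}" by simp

lemma qcont: "continuous_map FF Ctop q" using q_quot quotient_imp_continuous_map by blast
lemma qsurj: "q ` topspace FF = topspace Ctop" using q_quot quotient_imp_surjective_map by blast

lemma q_top: "x \<in> topspace FF \<Longrightarrow> q x \<in> topspace Ctop"
  by (metis qsurj imageI)

lemma q_eq: "x \<in> topspace FF \<Longrightarrow> x' \<in> topspace FF \<Longrightarrow> q x = q x' \<longleftrightarrow> (x = x' \<or> (snd x = 0 \<and> snd x' = 0))"
  using q_ident by blast

lemma q_v: assumes "x \<in> topspace FF" shows "q x = v \<longleftrightarrow> snd x = 0"
proof -
  obtain y0 where y0: "y0 \<in> topspace Y" using Y_nonempty[OF Y_cantor] by blast
  hence "v = q (y0, 0)" "(y0, 0) \<in> topspace FF" using v_top by auto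
  thus ?thesis using q_eq[OF assms, of "(y0,0)"] by auto
qed

lemma v_in: "v \<in> topspace Ctop"
proof -
  obtain y0 where y0: "y0 \<in> topspace Y" using Y_nonempty[OF Y_cantor] by blast
  hence "v = q (y0, 0)" "(y0, 0) \<in> topspace FF" using v_top by auto
  thus ?thesis using qsurj by blast
qed

lemma sat_open:
  assumes "openin FF U" "\<And>x u. x \<in> topspace FF \<Longrightarrow> u \<in> U \<Longrightarrow> q x = q u \<Longrightarrow> x \<in> U"
  shows "openin Ctop (q ` U)"
proof -
  have U: "U \<subseteq> topspace FF" using openin_subset assms(1) by blast
  have "q ` U \<subseteq> topspace Ctop" using U qsurj by blast
  moreover have "{x \<in> topspace FF. q x \<in> q ` U} = U" using U assms(2) by blast
  ultimately show ?thesis using q_quot assms(1) unfolding quotient_map_def by metis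
qed

lemma sat_closed:
  assumes "closedin FF U" "\<And>x u. x \<in> topspace FF \<Longrightarrow> u \<in> U \<Longrightarrow> q x = q u \<Longrightarrow> x \<in> U"
  shows "closedin Ctop (q ` U)"
proof -
  have U: "U \<subseteq> topspace FF" using closedin_subset assms(1) by blast
  have o: "openin FF (topspace FF - U)" using assms(1) by (simp add: closedin_def)
  have sat: "x \<notin> U" if "x \<in> topspace FF" "u \<in> topspace FF - U" "q x = q u" for x u
  proof
    assume "x \<in> U"
    hence "u \<in> U" using assms(2)[of u x] that by auto
    thus False using that by auto
  qed
  have "openin Ctop (q ` (topspace FF - U))"
    by (rule sat_open[OF o]) (use sat in auto)
  moreover have "q ` (topspace FF - U) = topspace Ctop - q ` U"
  proof
    show "q ` (topspace FF - U) \<subseteq> topspace Ctop - q ` U"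
    proof
      fix c assume "c \<in> q ` (topspace FF - U)"
      then obtain x where x: "x \<in> topspace FF" "x \<notin> U" "c = q x" by blast
      have "c \<in> topspace Ctop" using x qsurj by blast
      moreover have "c \<notin> q ` U"
      proof
        assume "c \<in> q ` U"
        then obtain u where "u \<in> U" "q x = q u" using x by auto
        thus False using assms(2)[of x u] x by auto
      qed
      ultimately show "c \<in> topspace Ctop - q ` U" by blast
    qed
    show "topspace Ctop - q ` U \<subseteq> q ` (topspace FF - U)"
    proof
      fix c assume c: "c \<in> topspace Ctop - q ` U"
      hence "c \<in> q ` topspace FF" using qsurj by simp
      then obtain x where x: "x \<in> topspace FF" "q x = c" by auto
      have "x \<notin> U" using x c by auto
      thus "c \<in> q ` (topspace FF - U)" using x by auto
    qed
  qed
  moreover have "q ` U \<subseteq> topspace Ctop" using U qsurj by blast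
  ultimately show ?thesis by (simp add: closedin_def)
qed

definition ht :: "'c \<Rightarrow> real" where
  "ht c = snd (SOME x. x \<in> topspace FF \<and> q x = c)"

lemma ht_q: assumes "x \<in> topspace FF" shows "ht (q x) = snd x"
proof -
  have "\<exists>x'. x' \<in> topspace FF \<and> q x' = q x" using assms by blast
  hence "(SOME x'. x' \<in> topspace FF \<and> q x' = q x) \<in> topspace FF \<and> q (SOME x'. x' \<in> topspace FF \<and> q x' = q x) = q x"
    by (rule someI_ex)
  then obtain x' where x': "x' = (SOME x'. x' \<in> topspace FF \<and> q x' = q x)" "x' \<in> topspace FF" "q x' = q x"
    by blast
  have "x' = x \<or> (snd x' = 0 \<and> snd x = 0)" using q_eq[OF x'(2) assms] x'(3) by simp
  hence "snd x' = snd x" by auto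
  thus ?thesis unfolding ht_def using x'(1) by simp
qed

lemma topC_E: assumes "c \<in> topspace Ctop" obtains x where "x \<in> topspace FF" "q x = c"
proof -
  have "c \<in> q ` topspace FF" using assms qsurj by simp
  thus ?thesis using that by auto
qed

lemma ht_range: assumes "c \<in> topspace Ctop" shows "ht c \<in> {0..1}"
proof -
  obtain x where x: "x \<in> topspace FF" "q x = c" using topC_E[OF assms] .
  thus ?thesis using ht_q[OF x(1)] by (auto simp: mem_Times_iff)
qed

lemma ht_v: assumes "c \<in> topspace Ctop" shows "ht c = 0 \<longleftrightarrow> c = v"
proof -
  obtain x where x: "x \<in> topspace FF" "q x = c" using topC_E[OF assms] .
  thus ?thesis using ht_q[OF x(1)] q_v[OF x(1)] by auto
qed

lemma snd_cont: "continuous_map FF euclideanreal snd"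
  using continuous_map_snd continuous_map_into_fulltopology by blast

lemma ht_cont: "continuous_map Ctop euclideanreal ht"
proof (rule continuous_compose_quotient_map[OF q_quot])
  show "continuous_map FF euclideanreal (ht \<circ> q)"
    by (rule continuous_map_eq[OF snd_cont]) (simp add: ht_q)
qed

definition "Pos0 = {x \<in> topspace FF. 0 < snd x}"

lemma Pos_open: "openin FF Pos0"
  unfolding Pos0_def using openin_continuous_map_preimage[OF snd_cont, of "{0<..}"] by auto

lemma Pos_sub: "Pos0 \<subseteq> topspace FF" unfolding Pos0_def by auto

lemma Pos_img: "q ` Pos0 = topspace Ctop - {v}"
proof
  show "q ` Pos0 \<subseteq> topspace Ctop - {v}"
  proof
    fix c assume "c \<in> q ` Pos0"
    then obtain x where x: "x \<in> topspace FF" "0 < snd x" "c = q x" unfolding Pos0_def by blast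
    have "c \<in> topspace Ctop" using x(1,3) q_top by simp
    moreover have "c \<noteq> v" using q_v[OF x(1)] x by auto
    ultimately show "c \<in> topspace Ctop - {v}" by blast
  qed
  show "topspace Ctop - {v} \<subseteq> q ` Pos0"
  proof
    fix c assume c: "c \<in> topspace Ctop - {v}"
    obtain x where x: "x \<in> topspace FF" "q x = c" using topC_E c by blast
    hence "snd x \<noteq> 0" using q_v c by auto
    moreover have "snd x \<ge> 0" using x(1) by (auto simp: mem_Times_iff)
    ultimately have "x \<in> Pos0" unfolding Pos0_def using x(1) by auto
    thus "c \<in> q ` Pos0" using x(2) by blast
  qed
qed

lemma Pos_sat: assumes "x \<in> topspace FF" "u \<in> U" "U \<subseteq> Pos0" "q x = q u" shows "x \<in> U"
proof -
  have u: "u \<in> topspace FF" "0 < snd u" using assms(2,3) unfolding Pos0_def by auto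
  have "x = u \<or> (snd x = 0 \<and> snd u = 0)" using q_eq[OF assms(1) u(1)] assms(4) by simp
  thus ?thesis using u assms(2) by auto
qed

lemma homeo: "homeomorphic_map (subtopology FF Pos0) (subtopology Ctop (topspace Ctop - {v})) q"
proof (rule bijective_open_imp_homeomorphic_map)
  show "continuous_map (subtopology FF Pos0) (subtopology Ctop (topspace Ctop - {v})) q"
    using Pos_img Pos_sub by (auto simp: continuous_map_in_subtopology intro: continuous_map_from_subtopology qcont)
  show "open_map (subtopology FF Pos0) (subtopology Ctop (topspace Ctop - {v})) q"
    unfolding open_map_def
  proof clarify
    fix U assume U: "openin (subtopology FF Pos0) U"
    hence U': "openin FF U" "U \<subseteq> Pos0" using openin_open_subtopology[OF Pos_open] by auto
    have "openin Ctop (q ` U)" by (rule sat_open[OF U'(1)]) (use Pos_sat U' in blast)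
    moreover have "q ` U \<subseteq> topspace Ctop - {v}" using Pos_img U' by blast
    ultimately show "openin (subtopology Ctop (topspace Ctop - {v})) (q ` U)"
      by (metis inf.absorb_iff2 openin_subtopology_Int2 inf_commute)
  qed
  show "q ` topspace (subtopology FF Pos0) = topspace (subtopology Ctop (topspace Ctop - {v}))"
    using Pos_img Pos_sub by auto
  show "inj_on q (topspace (subtopology FF Pos0))"
    using Pos_sub q_eq unfolding Pos0_def inj_on_def by auto
qed

lemma fst_conn: "connectedin FF L \<Longrightarrow> x \<in> L \<Longrightarrow> x' \<in> L \<Longrightarrow> fst x = fst x'"
proof -
  assume "connectedin FF L" "x \<in> L" "x' \<in> L"
  moreover have "connectedin Y (fst ` L)"
    using connectedin_continuous_map_image[OF continuous_map_fst] \<open>connectedin FF L\<close> by blast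
  ultimately show ?thesis using Y_conn[OF Y_cantor] by blast
qed

lemma spoke:
  assumes "connectedin Ctop S" "v \<notin> S" "c0 \<in> S"
  shows "\<exists>y\<in>topspace Y. \<forall>c\<in>S. \<exists>t. 0 < t \<and> t \<le> 1 \<and> c = q (y, t)"
proof -
  obtain g where g: "homeomorphic_maps (subtopology FF Pos0) (subtopology Ctop (topspace Ctop - {v})) q g"
    using homeo homeomorphic_map_maps by blast
  have gc: "continuous_map (subtopology Ctop (topspace Ctop - {v})) (subtopology FF Pos0) g"
    and gq: "\<And>c. c \<in> topspace Ctop - {v} \<Longrightarrow> q (g c) = c"
    using g unfolding homeomorphic_maps_def by auto
  have S: "S \<subseteq> topspace Ctop - {v}" using assms connectedin_subset_topspace by blast
  have "connectedin (subtopology Ctop (topspace Ctop - {v})) S" using assms(1) S by (simp add: connectedin_subtopology)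
  hence "connectedin (subtopology FF Pos0) (g ` S)" using connectedin_continuous_map_image[OF gc] by blast
  hence C: "connectedin FF (g ` S)" "g ` S \<subseteq> Pos0" by (auto simp: connectedin_subtopology)
  show ?thesis
  proof (intro bexI ballI)
    fix c assume c: "c \<in> S"
    have "fst (g c) = fst (g c0)" using fst_conn[OF C(1)] c assms(3) by blast
    moreover have "g c \<in> Pos0" using C c by blast
    moreover have "c \<in> topspace Ctop - {v}" using S c by blast
    hence "q (g c) = c" by (rule gq)
    hence "c = q (g c)" by simp
    ultimately show "\<exists>t. 0 < t \<and> t \<le> 1 \<and> c = q (fst (g c0), t)"
      unfolding Pos0_def by (metis (mono_tags, lifting) atLeastAtMost_iff mem_Collect_eq prod.collapse topF mem_Sigma_iff)
  next
    show "fst (g c0) \<in> topspace Y" using C assms(3) Pos_sub by fastforce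
  qed
qed

end



context cfan begin

lemma V0_open: "openin Ctop (topspace Ctop - {v})"
proof -
  have "openin Ctop (q ` Pos0)" by (rule sat_open[OF Pos_open]) (rule Pos_sat, auto)
  thus ?thesis using Pos_img by simp
qed

lemma Haus: "Hausdorff_space Ctop"
  unfolding Hausdorff_space_def
proof (intro allI impI)
  fix c1 c2 assume "c1 \<in> topspace Ctop \<and> c2 \<in> topspace Ctop \<and> c1 \<noteq> c2"
  hence c: "c1 \<in> topspace Ctop" "c2 \<in> topspace Ctop" "c1 \<noteq> c2" by auto
  show "\<exists>U V. openin Ctop U \<and> openin Ctop V \<and> c1 \<in> U \<and> c2 \<in> V \<and> disjnt U V"
  proof (cases "ht c1 = ht c2")
    case False
    have "\<exists>U V. open U \<and> open V \<and> ht c1 \<in> U \<and> ht c2 \<in> V \<and> U \<inter> V = {}"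
      by (rule separation_t2[THEN iffD1, OF False])
    then obtain U0 V0 where U0: "open U0" "open V0" "ht c1 \<in> U0" "ht c2 \<in> V0" "U0 \<inter> V0 = {}"
      by auto
    show ?thesis
    proof (intro exI conjI)
      show "openin Ctop {c \<in> topspace Ctop. ht c \<in> U0}"
        using openin_continuous_map_preimage[OF ht_cont] U0 by simp
      show "openin Ctop {c \<in> topspace Ctop. ht c \<in> V0}"
        using openin_continuous_map_preimage[OF ht_cont] U0 by simp
      show "disjnt {c \<in> topspace Ctop. ht c \<in> U0} {c \<in> topspace Ctop. ht c \<in> V0}"
        using U0(5) by (auto simp: disjnt_def)
    qed (use c U0 in auto)
  next
    case True
    have n1: "c1 \<noteq> v"
    proof
      assume a: "c1 = v"
      have "ht c1 = 0" using ht_v[OF c(1)] a by simp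
      hence "ht c2 = 0" using True by simp
      hence "c2 = v" using ht_v[OF c(2)] by simp
      thus False using a c(3) by simp
    qed
    have n2: "c2 \<noteq> v"
    proof
      assume a: "c2 = v"
      have "ht c2 = 0" using ht_v[OF c(2)] a by simp
      hence "ht c1 = 0" using True by simp
      hence "c1 = v" using ht_v[OF c(1)] by simp
      thus False using a c(3) by simp
    qed
    have HF: "Hausdorff_space FF"
      using Hausdorff_space_prod_topology Y_Hausdorff[OF Y_cantor] Hausdorff_space_subtopology Hausdorff_space_euclidean
      by metis
    have "Hausdorff_space (subtopology FF Pos0)" by (rule Hausdorff_space_subtopology[OF HF])
    moreover have "subtopology FF Pos0 homeomorphic_space subtopology Ctop (topspace Ctop - {v})"
      using homeo homeomorphic_space by blast
    ultimately have HV: "Hausdorff_space (subtopology Ctop (topspace Ctop - {v}))"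
      using homeomorphic_Hausdorff_space by blast
    have "c1 \<in> topspace (subtopology Ctop (topspace Ctop - {v}))" "c2 \<in> topspace (subtopology Ctop (topspace Ctop - {v}))"
      using c n1 n2 by auto
    then obtain U V where UV: "openin (subtopology Ctop (topspace Ctop - {v})) U"
      "openin (subtopology Ctop (topspace Ctop - {v})) V" "c1 \<in> U" "c2 \<in> V" "disjnt U V"
      using HV c(3) unfolding Hausdorff_space_def by blast
    have "openin Ctop U" "openin Ctop V" using UV(1,2) openin_open_subtopology[OF V0_open] by auto
    thus ?thesis using UV by blast
  qed
qed

lemma closedJ: "compactin Ctop J \<Longrightarrow> closedin Ctop J"
  using compactin_imp_closedin Haus by blast

lemma fill:
  assumes Jc: "connectedin Ctop J" and Jcl: "closedin Ctop J" and vJ: "v \<in> J"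
    and y: "y \<in> topspace Y" and u: "0 < u" "u < m" "m \<le> 1" and mJ: "q (y,m) \<in> J"
  shows "q (y,u) \<in> J"
proof (rule ccontr)
  assume nJ: "q (y,u) \<notin> J"
  define Ob where "Ob = {x \<in> topspace FF. q x \<in> topspace Ctop - J}"
  have "openin Ctop (topspace Ctop - J)" using Jcl by (simp add: closedin_def)
  hence "openin FF Ob" unfolding Ob_def by (rule openin_continuous_map_preimage[OF qcont])
  have yuF: "(y,u) \<in> topspace FF" using y u by auto
  hence yuO: "(y,u) \<in> Ob" unfolding Ob_def using nJ q_top by blast
  have "\<exists>U V. openin Y U \<and> openin (top_of_set {0..1}) V \<and> y \<in> U \<and> u \<in> V \<and> U \<times> V \<subseteq> Ob"
    by (rule openin_prod_topology_alt[THEN iffD1, OF \<open>openin FF Ob\<close>, rule_format, OF yuO])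
  then obtain U V where UV: "openin Y U" "openin (top_of_set {0..1}) V" "y \<in> U" "u \<in> V" "U \<times> V \<subseteq> Ob"
    by auto
  obtain T where T: "open T" "V = {0..1} \<inter> T" using UV(2) by (auto simp: openin_open)
  obtain \<epsilon> where e: "\<epsilon> > 0" "ball u \<epsilon> \<subseteq> T" using T UV(4) open_contains_ball by blast
  define e where "e = min \<epsilon> u"
  have e0: "0 < e" "e \<le> u" "e \<le> \<epsilon>" using e u unfolding e_def by auto
  obtain W where W: "y \<in> W" "W \<subseteq> U" "openin Y W" "closedin Y W" using Y_clopen[OF Y_cantor UV(1,3)] by blast
  have WY: "W \<subseteq> topspace Y" using W(3) openin_subset by blast
  have noJ: "q (w,t) \<notin> J" if "w \<in> W" "0 \<le> t" "t \<le> 1" "\<bar>t - u\<bar> < e" for w t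
  proof -
    have "t \<in> ball u \<epsilon>" using that e0 by (auto simp: dist_real_def)
    hence "t \<in> V" using T e that by auto
    hence "(w,t) \<in> Ob" using UV(5) W(2) that by blast
    thus ?thesis unfolding Ob_def by auto
  qed
  define P1 where "P1 = q ` (W \<times> {u-e<..1})"
  define P2 where "P2 = q ` (W \<times> {u..1})"
  have P12: "J \<inter> P1 = J \<inter> P2"
  proof
    show "J \<inter> P1 \<subseteq> J \<inter> P2"
    proof
      fix c assume c: "c \<in> J \<inter> P1"
      then obtain w t where wt: "w \<in> W" "u - e < t" "t \<le> 1" "c = q (w,t)" unfolding P1_def by auto
      have "\<not> t < u"
      proof
        assume "t < u"
        hence "\<bar>t - u\<bar> < e" "0 \<le> t" using wt e0 by auto
        thus False using noJ[OF wt(1)] wt c by auto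
      qed
      thus "c \<in> J \<inter> P2" using c wt unfolding P2_def by auto
    qed
    show "J \<inter> P2 \<subseteq> J \<inter> P1" unfolding P1_def P2_def using e0 by auto
  qed
  have "openin Ctop P1" unfolding P1_def
  proof (rule sat_open)
    have "openin (top_of_set {0..1}) {u-e<..(1::real)}"
      unfolding openin_open by (rule exI[of _ "{u-e<..}"]) (use e0 in auto)
    thus "openin FF (W \<times> {u-e<..1})" using W(3) by (simp add: openin_prod_Times_iff)
  next
    fix x x' assume H: "x \<in> topspace FF" "x' \<in> W \<times> {u-e<..1}" "q x = q x'"
    have x'F: "x' \<in> topspace FF" "snd x' > 0" using H(2) WY e0 by (auto simp: mem_Times_iff)
    have "x = x' \<or> (snd x = 0 \<and> snd x' = 0)" using q_eq[OF H(1) x'F(1)] H(3) by simp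
    thus "x \<in> W \<times> {u-e<..1}" using x'F H(2) by auto
  qed
  moreover have "closedin Ctop P2" unfolding P2_def
  proof (rule sat_closed)
    have "closedin (top_of_set {0..1}) {u..(1::real)}"
      unfolding closedin_closed by (rule exI[of _ "{u..}"]) (use u in auto)
    thus "closedin FF (W \<times> {u..1})" using W(4) by (simp add: closedin_prod_Times_iff)
  next
    fix x x' assume H: "x \<in> topspace FF" "x' \<in> W \<times> {u..1}" "q x = q x'"
    have x'F: "x' \<in> topspace FF" "snd x' > 0" using H(2) WY u by (auto simp: mem_Times_iff)
    have "x = x' \<or> (snd x = 0 \<and> snd x' = 0)" using q_eq[OF H(1) x'F(1)] H(3) by simp
    thus "x \<in> W \<times> {u..1}" using x'F H(2) by auto
  qed
  ultimately have "openin (subtopology Ctop J) (J \<inter> P1)" "closedin (subtopology Ctop J) (J \<inter> P1)"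
    using P12 openin_subtopology_Int2 closedin_subtopology_Int_closed by metis+
  moreover have "connectedin (subtopology Ctop J) J" using Jc by (simp add: connectedin_subtopology)
  ultimately have "J \<subseteq> J \<inter> P1 \<or> disjnt J (J \<inter> P1)" using connectedin_clopen_cases by blast
  moreover have "v \<notin> P1"
  proof
    assume "v \<in> P1"
    then obtain w t where wt: "w \<in> W" "u - e < t" "t \<le> 1" "v = q (w,t)" unfolding P1_def by auto
    have "(w,t) \<in> topspace FF" using wt WY e0 by auto
    hence "t = 0" using q_v[of "(w,t)"] wt(4) by simp
    thus False using wt e0 by simp
  qed
  moreover have "q (y,m) \<in> P1" unfolding P1_def using W(1) u e0 by auto
  ultimately show False using vJ mJ by (auto simp: disjnt_def)
qed

end



context cfan begin

lemma arc_facts: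
  assumes "arc_in Ctop A a b"
  obtains h where "A \<subseteq> topspace Ctop" "h ` {0..1::real} = A" "inj_on h {0..1}"
    "continuous_map (top_of_set {0..1}) Ctop h" "h 0 = a" "h 1 = b"
proof -
  obtain h where h: "A \<subseteq> topspace Ctop" "homeomorphic_map (top_of_set {0..1::real}) (subtopology Ctop A) h"
    "h 0 = a" "h 1 = b" using assms unfolding arc_in_def by blast
  have f1: "h ` {0..1} = A" using homeomorphic_imp_surjective_map[OF h(2)] h(1) by auto
  have f2: "inj_on h {0..1}" using homeomorphic_imp_injective_map[OF h(2)] by simp
  have f3: "continuous_map (top_of_set {0..1}) Ctop h"
    by (rule continuous_map_into_fulltopology[OF homeomorphic_imp_continuous_map[OF h(2)]])
  show ?thesis by (rule that[OF h(1) f1 f2 f3 h(3) h(4)])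
qed

lemma endpt:
  assumes y: "y \<in> topspace Y" and m: "0 < m" "m \<le> 1" and mJ: "q (y,m) \<in> J"
    and mx: "\<And>s. 0 \<le> s \<Longrightarrow> s \<le> 1 \<Longrightarrow> q (y,s) \<in> J \<Longrightarrow> s \<le> m"
  shows "end_point_of Ctop J (q (y,m))"
  unfolding end_point_of_def
proof (intro conjI allI impI)
  show "q (y,m) \<in> J" by (rule mJ)
  fix A a b assume H: "A \<subseteq> J \<and> arc_in Ctop A a b \<and> q (y, m) \<in> A"
  show "q (y,m) = a \<or> q (y,m) = b"
  proof (rule ccontr)
    assume ne: "\<not> (q (y,m) = a \<or> q (y,m) = b)"
    obtain h where h: "A \<subseteq> topspace Ctop" "h ` {0..1::real} = A" "inj_on h {0..1}"
      "continuous_map (top_of_set {0..1}) Ctop h" "h 0 = a" "h 1 = b"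
      using arc_facts[of A a b] H by metis
    obtain t0 where t0: "t0 \<in> {0..1}" "h t0 = q (y,m)" using H h(2) by (metis imageE)
    have t01: "0 < t0" "t0 < 1" using t0 ne h(5,6) by (auto simp: less_eq_real_def)
    define \<phi> where "\<phi> = ht \<circ> h"
    have \<phi>c: "continuous_on {0..1} \<phi>"
      using continuous_map_compose[OF h(4) ht_cont] unfolding \<phi>_def by simp
    have ymF: "(y,m) \<in> topspace FF" using y m by auto
    have \<phi>t0: "\<phi> t0 = m" unfolding \<phi>_def using t0 ht_q[OF ymF] by simp
    obtain \<delta> where d: "\<delta> > 0" "\<And>t. t \<in> {0..1} \<Longrightarrow> dist t t0 < \<delta> \<Longrightarrow> dist (\<phi> t) (\<phi> t0) < m"
      using \<phi>c t0(1) m(1) unfolding continuous_on_iff by metis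
    define d where "d = min (\<delta>/2) (min (t0/2) ((1-t0)/2))"
    have d0: "0 < d" "d < \<delta>" "d \<le> t0/2" "d \<le> (1-t0)/2" using d(1) t01 unfolding d_def by (auto simp del: min_le_iff_disj intro: min.coboundedI2 simp: min_def)
    define I where "I = {t0-d..t0+d}"
    have I01: "I \<subseteq> {0..1}" unfolding I_def using d0 t01 by auto
    have hI: "h t \<in> A" if "t \<in> I" for t using h(2) I01 that by blast
    have pos: "\<phi> t > 0" if "t \<in> I" for t
    proof -
      have "dist t t0 < \<delta>" using that d0 unfolding I_def by (auto simp: dist_real_def)
      hence "dist (\<phi> t) m < m" using d(2) I01 that \<phi>t0 by auto
      thus ?thesis by (auto simp: dist_real_def)
    qed
    have notv: "v \<notin> h ` I"
    proof
      assume "v \<in> h ` I"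
      then obtain t where t: "t \<in> I" "h t = v" by blast
      have "ht v = 0" using ht_v v_in by simp
      thus False using pos[OF t(1)] t(2) unfolding \<phi>_def by simp
    qed
    have conI: "connectedin Ctop (h ` I)"
    proof (rule connectedin_continuous_map_image)
      show "continuous_map (top_of_set I) Ctop h"
        by (rule continuous_map_from_subtopology_mono[OF h(4) I01])
      show "connectedin (top_of_set I) I" unfolding I_def by (simp add: connectedin_subtopology)
    qed
    have t0I: "t0 \<in> I" unfolding I_def using d0 by auto
    obtain y1 where y1: "y1 \<in> topspace Y" "\<And>c. c \<in> h ` I \<Longrightarrow> \<exists>t. 0 < t \<and> t \<le> 1 \<and> c = q (y1, t)"
      using spoke[OF conI notv imageI[OF t0I]] by blast
    obtain s0 where s0: "0 < s0" "s0 \<le> 1" "h t0 = q (y1, s0)" using y1(2)[OF imageI[OF t0I]] by blast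
    have "(y1,s0) \<in> topspace FF" using y1 s0 by auto
    hence "(y,m) = (y1,s0)" using q_eq[OF ymF] s0 t0(2) m by auto
    hence yy: "y1 = y" by simp
    have rep: "h t = q (y, \<phi> t)" if tI: "t \<in> I" for t
    proof -
      obtain s where s: "0 < s" "s \<le> 1" "h t = q (y, s)" using y1(2)[OF imageI[OF tI]] yy by blast
      have "(y,s) \<in> topspace FF" using y s by auto
      hence "\<phi> t = s" unfolding \<phi>_def using ht_q s(3) by simp
      thus ?thesis using s by simp
    qed
    have le: "\<phi> t \<le> m" if "t \<in> I" for t
    proof (rule mx)
      have "h t \<in> topspace Ctop" using hI[OF that] h(1) by blast
      thus "0 \<le> \<phi> t" "\<phi> t \<le> 1" using ht_range unfolding \<phi>_def by auto
      show "q (y, \<phi> t) \<in> J" using rep[OF that] hI[OF that] H by auto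
    qed
    have inj: "t1 = t2" if "t1 \<in> I" "t2 \<in> I" "\<phi> t1 = \<phi> t2" for t1 t2
    proof -
      have "h t1 = h t2" using rep that by simp
      thus ?thesis using h(3) I01 that by (meson inj_onD subsetD)
    qed
    define a1 where "a1 = t0 - d"
    define b1 where "b1 = t0 + d"
    have a1I: "a1 \<in> I" and b1I: "b1 \<in> I" unfolding I_def a1_def b1_def using d0 by auto
    have "\<phi> a1 \<noteq> m" using inj[OF a1I t0I] \<phi>t0 d0 unfolding a1_def by auto
    hence a1m: "\<phi> a1 < m" using le[OF a1I] by simp
    have "\<phi> b1 \<noteq> m" using inj[OF b1I t0I] \<phi>t0 d0 unfolding b1_def by auto
    hence b1m: "\<phi> b1 < m" using le[OF b1I] by simp
    have cI: "continuous_on I \<phi>" using continuous_on_subset[OF \<phi>c I01] .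
    show False
    proof (cases "\<phi> a1 \<le> \<phi> b1")
      case True
      have "continuous_on {a1..t0} \<phi>"
        by (rule continuous_on_subset[OF cI]) (auto simp: I_def a1_def)
      then obtain x where x: "a1 \<le> x" "x \<le> t0" "\<phi> x = \<phi> b1"
        using IVT'[of \<phi> a1 "\<phi> b1" t0] True b1m \<phi>t0 d0 unfolding a1_def by auto
      have "x \<in> I" using x unfolding I_def a1_def using d0 by auto
      hence "x = b1" using inj b1I x(3) by blast
      thus False using x d0 unfolding b1_def by auto
    next
      case False
      have "continuous_on {t0..b1} \<phi>"
        by (rule continuous_on_subset[OF cI]) (auto simp: I_def b1_def)
      then obtain x where x: "t0 \<le> x" "x \<le> b1" "\<phi> x = \<phi> a1"
        using IVT2'[of \<phi> b1 "\<phi> a1" t0] False a1m \<phi>t0 d0 unfolding b1_def by auto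
      have "x \<in> I" using x unfolding I_def b1_def using d0 by auto
      hence "x = a1" using inj a1I x(3) by blast
      thus False using x d0 unfolding a1_def by auto
    qed
  qed
qed

end



context cfan begin

theorem main:
  assumes J_cont: "subcontinuum Ctop J" and K_cont: "subcontinuum Ctop K"
    and vK: "v \<in> K" and KJ: "K \<subseteq> J"
    and r_retr: "retraction_onto Ctop J K r"
    and R_retr: "retraction_onto FF (fence FF q v J) (fence FF q v K) R"
    and R_lift: "\<forall>x\<in>fence FF q v J. q (R x) = r (q x)"
  shows "semi_simple Ctop v J r"
proof -
  have Jt: "J \<subseteq> topspace Ctop" using J_cont compactin_subset_topspace unfolding subcontinuum_def by blast
  have Jcl: "closedin Ctop J" using J_cont closedJ unfolding subcontinuum_def by blast
  have Jc: "connectedin Ctop J" using J_cont unfolding subcontinuum_def by blast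
  have vJ: "v \<in> J" using vK KJ by blast
  have rv: "r v = v" using r_retr vK v_in unfolding retraction_onto_def by blast
  have rJ: "r c \<in> K" if "c \<in> J" for c
  proof -
    have "continuous_map (subtopology Ctop J) (subtopology Ctop K) r" using r_retr unfolding retraction_onto_def by blast
    hence "r ` topspace (subtopology Ctop J) \<subseteq> topspace (subtopology Ctop K)"
      by (rule continuous_map_image_subset_topspace)
    thus ?thesis using that Jt by auto
  qed
  have Rc: "continuous_map (subtopology FF (fence FF q v J)) (subtopology FF (fence FF q v K)) R"
    using R_retr unfolding retraction_onto_def by blast
  have RF: "R x \<in> topspace FF" if "x \<in> fence FF q v J" for x
  proof -
    have "R ` topspace (subtopology FF (fence FF q v J)) \<subseteq> topspace (subtopology FF (fence FF q v K))"
      by (rule continuous_map_image_subset_topspace[OF Rc])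
    moreover have "x \<in> topspace FF"
      using that closure_of_subset_topspace[of FF] unfolding fence_def by blast
    hence "x \<in> topspace (subtopology FF (fence FF q v J))" using that by simp
    ultimately show ?thesis by auto
  qed
  have Rc': "continuous_map (subtopology FF (fence FF q v J)) FF R"
    by (rule continuous_map_into_fulltopology[OF Rc])
  have infence: "x \<in> fence FF q v J" if "x \<in> topspace FF" "q x \<in> J - {v}" for x
  proof -
    have "{x \<in> topspace FF. q x \<in> J - {v}} \<subseteq> FF closure_of {x \<in> topspace FF. q x \<in> J - {v}}"
      by (rule closure_of_subset) auto
    thus ?thesis using that unfolding fence_def by blast
  qed
  show ?thesis unfolding semi_simple_def
  proof
    fix A assume "A \<in> legs Ctop v J"
    then obtain e where Ae: "A \<subseteq> J" "e \<noteq> v" "end_point_of Ctop J e" "arc_in Ctop A v e"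
      unfolding legs_def by blast
    obtain g where g: "A \<subseteq> topspace Ctop" "g ` {0..1::real} = A" "inj_on g {0..1}"
      "continuous_map (top_of_set {0..1}) Ctop g" "g 0 = v" "g 1 = e"
      using arc_facts[of A v e] Ae(4) by metis
    define A' where "A' = g ` {0<..1}"
    have vA': "v \<notin> A'"
    proof
      assume "v \<in> A'"
      then obtain t where t: "t \<in> {0<..1}" "g t = v" unfolding A'_def by blast
      have "t = 0" using inj_onD[OF g(3), of t 0] t g(5) by auto
      thus False using t by simp
    qed
    have cA': "connectedin Ctop A'" unfolding A'_def
    proof (rule connectedin_continuous_map_image)
      show "continuous_map (top_of_set {0<..1}) Ctop g"
        by (rule continuous_map_from_subtopology_mono[OF g(4)]) auto
      show "connectedin (top_of_set {0<..1}) {0<..(1::real)}" by (simp add: connectedin_subtopology)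
    qed
    have eA': "e \<in> A'" unfolding A'_def using g(6) by force
    obtain y where y: "y \<in> topspace Y" "\<And>c. c \<in> A' \<Longrightarrow> \<exists>t. 0 < t \<and> t \<le> 1 \<and> c = q (y, t)"
      using spoke[OF cA' vA' eA'] by blast
    define ell where "ell t = (y, ht (g t))" for t
    have ell: "ell t \<in> topspace FF" "q (ell t) = g t" if tI: "t \<in> {0<..1}" for t
    proof -
      obtain s where s: "0 < s" "s \<le> 1" "g t = q (y, s)" using y(2)[of "g t"] tI unfolding A'_def by blast
      have "(y,s) \<in> topspace FF" using y s by auto
      hence "ht (g t) = s" using ht_q s(3) by simp
      thus "ell t \<in> topspace FF" "q (ell t) = g t" unfolding ell_def using s y by auto
    qed
    define L where "L = ell ` {0<..1}"
    have cL: "connectedin FF L" unfolding L_def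
    proof (rule connectedin_continuous_map_image)
      have gc: "continuous_map (top_of_set {0<..1}) Ctop g"
        by (rule continuous_map_from_subtopology_mono[OF g(4)]) auto
      have "continuous_map (top_of_set {0<..1}) euclideanreal (ht \<circ> g)"
        by (rule continuous_map_compose[OF gc ht_cont])
      moreover have "(ht \<circ> g) t \<in> {0..1}" if "t \<in> {0<..1}" for t
      proof -
        have "g t \<in> A" using g(2) that by auto
        thus ?thesis using ht_range g(1) by auto
      qed
      ultimately have c2: "continuous_map (top_of_set {0<..1}) (top_of_set {0..1}) (ht \<circ> g)"
        by (auto simp: continuous_map_in_subtopology)
      have c1: "continuous_map (top_of_set {0<..(1::real)}) Y (\<lambda>t. y)" using y(1) by simp
      show "continuous_map (top_of_set {0<..1}) FF ell"
        using continuous_map_pairedI[OF c1 c2] unfolding ell_def by (simp add: o_def)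
      show "connectedin (top_of_set {0<..1}) {0<..(1::real)}" by (simp add: connectedin_subtopology)
    qed
    have Lf: "L \<subseteq> fence FF q v J"
    proof
      fix x assume "x \<in> L"
      then obtain t where t: "t \<in> {0<..1}" "x = ell t" unfolding L_def by blast
      have "g t \<in> A'" unfolding A'_def using t by blast
      hence "g t \<in> J - {v}" using vA' Ae(1) g(2) t unfolding A'_def by auto
      thus "x \<in> fence FF q v J" using infence ell[OF t(1)] t(2) by simp
    qed
    have cRL: "connectedin FF (R ` L)"
    proof (rule connectedin_continuous_map_image[OF Rc'])
      show "connectedin (subtopology FF (fence FF q v J)) L" using cL Lf by (simp add: connectedin_subtopology)
    qed
    have l1: "ell 1 \<in> L" unfolding L_def by simp
    define y' where "y' = fst (R (ell 1))"
    have y'Y: "y' \<in> topspace Y" unfolding y'_def using RF[of "ell 1"] Lf l1 by (auto simp: mem_Times_iff)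
    have key: "r a = v \<or> (\<exists>s. 0 \<le> s \<and> s \<le> 1 \<and> r a = q (y', s) \<and> q (y', s) \<in> J)" if aA: "a \<in> A" for a
    proof -
      obtain t where t: "t \<in> {0..1}" "a = g t" using aA g(2) by blast
      show ?thesis
      proof (cases "t = 0")
        case True thus ?thesis using t g(5) rv by simp
      next
        case False
        hence t': "t \<in> {0<..1}" using t by auto
        have xL: "ell t \<in> L" unfolding L_def using t' by blast
        hence xf: "ell t \<in> fence FF q v J" using Lf by blast
        have ra: "r a = q (R (ell t))" using R_lift xf ell[OF t'] t(2) by simp
        have "fst (R (ell t)) = y'" unfolding y'_def
          using fst_conn[OF cRL] xL l1 by blast
        moreover have RFt: "R (ell t) \<in> topspace FF" using RF[OF xf] .
        ultimately have "R (ell t) = (y', snd (R (ell t)))" "0 \<le> snd (R (ell t))" "snd (R (ell t)) \<le> 1"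
          by (auto simp: mem_Times_iff)
        moreover have "r a \<in> J" using rJ aA Ae(1) KJ by blast
        ultimately show ?thesis using ra by metis
      qed
    qed
    define S where "S = {s \<in> {0..1}. q (y', s) \<in> J}"
    have qy: "continuous_map (top_of_set {0..1}) Ctop (\<lambda>s. q (y', s))"
    proof -
      have "continuous_map (top_of_set {0..1}) FF (\<lambda>s. (y', s))"
        by (rule continuous_map_pairedI) (use y'Y in auto)
      thus ?thesis using continuous_map_compose[OF _ qcont] by (simp add: o_def)
    qed
    have "closedin (top_of_set {0..1}) {s \<in> topspace (top_of_set {0..1}). q (y', s) \<in> J}"
      by (rule closedin_continuous_map_preimage[OF qy Jcl])
    hence Scl: "closed S" unfolding S_def using closedin_closed_trans by auto
    have q0: "q (y', 0) = v" using v_top y'Y by simp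
    have S0: "0 \<in> S" unfolding S_def using q0 vJ by simp
    have Sb: "bdd_above S" unfolding S_def by (rule bdd_aboveI[of _ 1]) auto
    define m where "m = Sup S"
    have mS: "m \<in> S" unfolding m_def using closed_contains_Sup[OF _ Sb Scl] S0 by blast
    have sm: "s \<le> m" if "s \<in> S" for s unfolding m_def by (rule cSup_upper[OF that Sb])
    have m01: "0 \<le> m" "m \<le> 1" using mS sm[OF S0] unfolding S_def by auto
    show "\<exists>B\<in>legs Ctop v J. r ` A \<subseteq> B"
    proof (cases "m = 0")
      case True
      have "r ` A \<subseteq> A"
      proof
        fix c assume "c \<in> r ` A"
        then obtain a where a: "a \<in> A" "c = r a" by blast
        have "c = v"
        proof (cases "r a = v")
          case False
          then obtain s where s: "0 \<le> s" "s \<le> 1" "r a = q (y', s)" "q (y', s) \<in> J" using key[OF a(1)] by blast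
          have "s \<in> S" unfolding S_def using s by auto
          hence "s = 0" using sm True s by fastforce
          thus ?thesis using s q0 a by simp
        qed (use a in simp)
        moreover have "v \<in> A" using g(2,5) by force
        ultimately show "c \<in> A" by simp
      qed
      thus ?thesis using \<open>A \<in> legs Ctop v J\<close> by blast
    next
      case False
      hence m0: "0 < m" using m01 by simp
      define b where "b t = q (y', m * t)" for t
      define B where "B = b ` {0..1}"
      have bB: "b t \<in> J" if "t \<in> {0..1}" for t
      proof -
        have mt: "0 \<le> m*t" "m * t \<le> m" using that m0 by (auto simp: mult_le_cancel_left1)
        consider "m*t = 0" | "m*t = m" | "0 < m*t" "m*t < m" using mt by linarith
        thus ?thesis
        proof cases
          case 1 thus ?thesis using q0 vJ unfolding b_def by metis
        next
          case 2
          have "q (y', m) \<in> J" using mS unfolding S_def by simp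
          thus ?thesis using 2 unfolding b_def by metis
        next
          case 3
          have "q (y', m) \<in> J" using mS unfolding S_def by simp
          thus ?thesis unfolding b_def using fill[OF Jc Jcl vJ y'Y 3(1) 3(2) m01(2)] by blast
        qed
      qed
      have BJ: "B \<subseteq> J" unfolding B_def using bB by blast
      have e'v: "q (y', m) \<noteq> v" using q_v[of "(y',m)"] y'Y m0 m01 by auto
      have ep: "end_point_of Ctop J (q (y', m))"
      proof (rule endpt[OF y'Y m0 m01(2)])
        show "q (y', m) \<in> J" using mS unfolding S_def by simp
        fix s assume "0 \<le> s" "s \<le> 1" "q (y', s) \<in> J"
        thus "s \<le> m" using sm unfolding S_def by simp
      qed
      have arc: "arc_in Ctop B v (q (y', m))"
        unfolding arc_in_def
      proof (intro conjI exI)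
        show "B \<subseteq> topspace Ctop" using BJ Jt by blast
        have bc: "continuous_map (top_of_set {0..1}) Ctop b"
        proof -
          have mc: "continuous_map (top_of_set {0..1}) (top_of_set {0..1}) (\<lambda>t. m * t)"
            using m0 m01 by (auto simp: continuous_map_in_subtopology intro!: continuous_intros mult_le_one)
          have "continuous_map (top_of_set {0..1}) Ctop ((\<lambda>s. q (y', s)) \<circ> (\<lambda>t. m*t))"
            by (rule continuous_map_compose[OF mc qy])
          thus ?thesis unfolding b_def by (simp add: o_def)
        qed
        show "homeomorphic_map (top_of_set {0..1}) (subtopology Ctop B) b"
        proof (rule continuous_imp_homeomorphic_map)
          show "continuous_map (top_of_set {0..1}) (subtopology Ctop B) b"
            using bc unfolding B_def by (auto simp: continuous_map_in_subtopology)
          show "compact_space (top_of_set {0..(1::real)})" by (simp add: compact_space_subtopology)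
          show "Hausdorff_space (subtopology Ctop B)" by (rule Hausdorff_space_subtopology[OF Haus])
          show "b ` topspace (top_of_set {0..1}) = topspace (subtopology Ctop B)"
            using BJ Jt unfolding B_def by auto
          show "inj_on b (topspace (top_of_set {0..1}))"
          proof (rule inj_onI)
            fix t1 t2 assume t: "t1 \<in> topspace (top_of_set {0..1::real})" "t2 \<in> topspace (top_of_set {0..1::real})" "b t1 = b t2"
            have F1: "(y', m*t1) \<in> topspace FF" "(y', m*t2) \<in> topspace FF"
              using t y'Y m0 m01 by (auto simp: mult_le_one)
            have "m*t1 = m*t2" using q_eq[OF F1] t(3) unfolding b_def by auto
            thus "t1 = t2" using m0 by simp
          qed
        qed
        show "b 0 = v" using q0 unfolding b_def by simp
        show "b 1 = q (y', m)" unfolding b_def by simp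
      qed
      have "r ` A \<subseteq> B"
      proof
        fix c assume "c \<in> r ` A"
        then obtain a where a: "a \<in> A" "c = r a" by blast
        show "c \<in> B"
        proof (cases "r a = v")
          case True
          have "b 0 = v" using q0 unfolding b_def by simp
          thus ?thesis using True a unfolding B_def by force
        next
          case False
          then obtain s where s: "0 \<le> s" "s \<le> 1" "r a = q (y', s)" "q (y', s) \<in> J" using key[OF a(1)] by blast
          have "s \<in> S" unfolding S_def using s by auto
          hence sm': "s \<le> m" using sm by blast
          have "b (s/m) = q (y', s)" unfolding b_def using m0 by simp
          moreover have "s/m \<in> {0..1}" using s sm' m0 by auto
          ultimately show ?thesis using s a unfolding B_def by (metis imageI)
        qed
      qed
      moreover have "B \<in> legs Ctop v J"
        unfolding legs_def using BJ e'v ep arc by blast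
      ultimately show ?thesis by blast
    qed
  qed
qed

end

theorem mainTheorem14:
  fixes Y :: "'a topology" and Ctop :: "'c topology"
    and q :: "'a \<times> real \<Rightarrow> 'c" and v :: 'c
    and J K :: "'c set" and r :: "'c \<Rightarrow> 'c"
    and R :: "'a \<times> real \<Rightarrow> 'a \<times> real"
  defines "F \<equiv> prod_topology Y (top_of_set {0..1::real})"
  assumes Y_cantor: "Y homeomorphic_space top_of_set cantor_ternary"
    and q_quot: "quotient_map F Ctop q"
    and q_ident: "\<forall>x\<in>topspace F. \<forall>y\<in>topspace F.
                    q x = q y \<longleftrightarrow> (x = y \<or> (snd x = 0 \<and> snd y = 0))"
    and v_top: "\<forall>y\<in>topspace Y. v = q (y, 0)"
    and J_cont: "subcontinuum Ctop J" and K_cont: "subcontinuum Ctop K"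
    and vK: "v \<in> K" and KJ: "K \<subseteq> J"
    and r_retr: "retraction_onto Ctop J K r"
    and R_retr: "retraction_onto F (fence F q v J) (fence F q v K) R"
    and R_lift: "\<forall>x\<in>fence F q v J. q (R x) = r (q x)"
  shows "semi_simple Ctop v J r"
proof -
  have q_quot': "quotient_map (prod_topology Y (top_of_set {0..1::real})) Ctop q"
    using q_quot unfolding F_def .
  have q_ident': "\<forall>x\<in>topspace (prod_topology Y (top_of_set {0..1::real})).
                  \<forall>y\<in>topspace (prod_topology Y (top_of_set {0..1::real})).
                    q x = q y \<longleftrightarrow> (x = y \<or> (snd x = 0 \<and> snd y = 0))"
    using q_ident unfolding F_def .
  interpret cfan Y Ctop q v by (rule cfan.intro[OF Y_cantor q_quot' q_ident' v_top])
  show ?thesis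
    by (rule main[OF J_cont K_cont vK KJ r_retr R_retr[unfolded F_def] R_lift[unfolded F_def]])
qed

end
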